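(* For the complete graph $K_n$ with $n\ge 3$ vertices, $b_{OCD}(K_n)=1$ if $n=3$ and $b_{OCD}(K_n)=\lceil n/2\rceil$ if $n\ge 4$.
   Context: A set $S\subseteq V$ is a dominating set of a graph $G=(V,E)$ if every vertex not in $S$ is adjacent to a vertex of $S$. A set $\tilde D\subseteq V$ is an outer-connected dominating set of $G$ if $\tilde D$ is dominating and the induced subgraph $G[V\setminus\tilde D]$ is connected (the empty graph counts as connected). $\tilde\gamma_c(G)$ is the minimum size of an outer-connected dominating set. For a graph $G$ without isolated vertices, the outer-connected bondage number $b_{OCD}(G)$ is the minimum number of edges whose removal from $G$ yields a graph $G'$ with $\tilde\gamma_c(G')>\tilde\gamma_c(G)$. *)

theory Defs
  imports Complex_Main
begin

(* A simple graph is given by a vertex set V and an edge set E of 2-element subsets of V. *)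

definition adj :: "'a set set \<Rightarrow> 'a \<Rightarrow> 'a \<Rightarrow> bool" where
  "adj E x y \<longleftrightarrow> {x, y} \<in> E \<and> x \<noteq> y"

definition dominating :: "'a set \<Rightarrow> 'a set set \<Rightarrow> 'a set \<Rightarrow> bool" where
  "dominating V E S \<longleftrightarrow> S \<subseteq> V \<and> (\<forall>v \<in> V - S. \<exists>u \<in> S. adj E v u)"

(* the induced subgraph G[W] is connected (the empty graph counts as connected) *)
definition induced_connected :: "'a set set \<Rightarrow> 'a set \<Rightarrow> bool" where
  "induced_connected E W \<longleftrightarrow>
     (\<forall>x \<in> W. \<forall>y \<in> W. (x, y) \<in> {(u, v). u \<in> W \<and> v \<in> W \<and> adj E u v}\<^sup>*)"

definition outer_connected_dominating :: "'a set \<Rightarrow> 'a set set \<Rightarrow> 'a set \<Rightarrow> bool" where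
  "outer_connected_dominating V E D \<longleftrightarrow> dominating V E D \<and> induced_connected E (V - D)"

definition ocd_number :: "'a set \<Rightarrow> 'a set set \<Rightarrow> nat" where
  "ocd_number V E = (LEAST k. \<exists>D. outer_connected_dominating V E D \<and> card D = k)"

definition ocd_bondage :: "'a set \<Rightarrow> 'a set set \<Rightarrow> nat" where
  "ocd_bondage V E = (LEAST k. \<exists>F. F \<subseteq> E \<and> finite F \<and> card F = k \<and>
                                   ocd_number V (E - F) > ocd_number V E)"

definition complete_vertices :: "nat \<Rightarrow> nat set" where
  "complete_vertices n = {0..<n}"

definition complete_edges :: "nat \<Rightarrow> nat set set" where
  "complete_edges n = {e. e \<subseteq> {0..<n} \<and> card e = 2}"

end

theory Submission
  imports Defs
begin

lemma ocd_V: "outer_connected_dominating V E V"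
  by (simp add: outer_connected_dominating_def dominating_def induced_connected_def)

lemma ocd_number_eq1:
  assumes "finite V" "V \<noteq> {}"
  shows "ocd_number V E = 1 \<longleftrightarrow> (\<exists>v. outer_connected_dominating V E {v})"
        "ocd_number V E \<ge> 1"
proof -
  let ?P = "\<lambda>k. \<exists>D. outer_connected_dominating V E D \<and> card D = k"
  have P: "?P (ocd_number V E)" unfolding ocd_number_def
    by (rule LeastI[of ?P "card V"]) (use ocd_V in blast)
  then obtain D where D: "outer_connected_dominating V E D" "card D = ocd_number V E" by blast
  have "D \<subseteq> V" using D(1) by (simp add: outer_connected_dominating_def dominating_def)
  hence "finite D" using assms finite_subset by blast
  moreover have "D \<noteq> {}" using D(1) assms(2)
    by (auto simp: outer_connected_dominating_def dominating_def)
  ultimately show ge: "ocd_number V E \<ge> 1" using D(2) by (metis card_0_eq less_one not_le)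
  show "ocd_number V E = 1 \<longleftrightarrow> (\<exists>v. outer_connected_dominating V E {v})"
  proof
    assume "ocd_number V E = 1"
    with D show "\<exists>v. outer_connected_dominating V E {v}" by (metis card_1_singletonE)
  next
    assume "\<exists>v. outer_connected_dominating V E {v}"
    then have "?P 1" by force
    hence "ocd_number V E \<le> 1" unfolding ocd_number_def by (rule Least_le)
    with ge show "ocd_number V E = 1" by simp
  qed
qed

lemma in_edges: "x<n \<Longrightarrow> y<n \<Longrightarrow> x\<noteq>y \<Longrightarrow> {x,y} \<in> complete_edges n"
  by (auto simp: complete_edges_def)

lemma dom_iff: assumes "v<n"
  shows "dominating {0..<n} (complete_edges n - F) {v} \<longleftrightarrow> (\<forall>u<n. u\<noteq>v \<longrightarrow> {u,v} \<notin> F)"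
  using assms in_edges[of _ n] unfolding dominating_def adj_def by auto

lemma ceil_half: "nat \<lceil>real n / 2\<rceil> = (n+1) div 2"
proof (cases "even n")
  case True
  then obtain k where "n = 2*k" by blast
  then show ?thesis by simp
next
  case False
  then obtain k where k: "n = 2*k+1" by (blast elim: oddE)
  have "\<lceil>real n / 2\<rceil> = int k + 1"
    unfolding k by (intro ceiling_unique) auto
  then show ?thesis using k by simp
qed


lemma connected_small:
  assumes F: "F \<subseteq> complete_edges n" "finite F" "card F + 3 \<le> n" and v: "v < n"
  shows "induced_connected (complete_edges n - F) ({0..<n} - {v})"
  unfolding induced_connected_def
proof (intro ballI)
  fix x y assume x: "x \<in> {0..<n} - {v}" and y: "y \<in> {0..<n} - {v}"
  let ?W = "{0..<n} - {v}"
  let ?R = "{(u, w). u \<in> ?W \<and> w \<in> ?W \<and> adj (complete_edges n - F) u w}"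
  have edge: "(a, b) \<in> ?R" if "a \<in> ?W" "b \<in> ?W" "a \<noteq> b" "{a,b} \<notin> F" for a b
    using that in_edges[of a n b] by (auto simp: adj_def)
  show "(x, y) \<in> ?R\<^sup>*"
  proof (cases "x = y \<or> {x,y} \<notin> F")
    case True
    then show ?thesis using edge[OF x y] by auto
  next
    case False
    hence xy: "x \<noteq> y" "{x,y} \<in> F" by auto
    define Z where "Z = {0..<n} - {v,x,y}"
    have "card {v,x,y} = 3" using x y xy by auto
    hence cZ: "card Z = n - 3" unfolding Z_def using x y v
      by (subst card_Diff_subset) auto
    define A where "A = {z\<in>Z. {x,z} \<in> F \<or> {z,y} \<in> F}"
    define h where "h z = (if {x,z} \<in> F then {x,z} else {z,y})" for z
    have inj: "inj_on h A"
      unfolding inj_on_def h_def A_def Z_def by (auto simp: doubleton_eq_iff)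
    have sub: "h ` A \<subseteq> F - {{x,y}}"
      unfolding h_def A_def Z_def by (auto simp: doubleton_eq_iff)
    have "card A = card (h ` A)" using inj by (simp add: card_image)
    also have "\<dots> \<le> card (F - {{x,y}})" using sub F(2) by (intro card_mono) auto
    also have "\<dots> = card F - 1" using xy by simp
    finally have cA: "card A \<le> card F - 1" .
    have "card F \<ge> 1" using xy F(2) by (metis One_nat_def Suc_leI card_gt_0_iff empty_iff)
    hence "card A < card Z" using cA cZ F(3) by linarith
    moreover have "A \<subseteq> Z" by (auto simp: A_def)
    ultimately have "\<not> Z \<subseteq> A" by auto
    then obtain z where z: "z \<in> Z" "z \<notin> A" by blast
    have "(x, z) \<in> ?R" using z x unfolding Z_def A_def by (intro edge) auto
    moreover have "(z, y) \<in> ?R" using z y unfolding Z_def A_def by (intro edge) auto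
    ultimately show ?thesis by (meson converse_rtrancl_into_rtrancl r_into_rtrancl)
  qed
qed


lemma ocd_single_iff:
  assumes "v < n"
  shows "outer_connected_dominating {0..<n} (complete_edges n - F) {v} \<longleftrightarrow>
     (\<forall>u<n. u\<noteq>v \<longrightarrow> {u,v} \<notin> F) \<and> induced_connected (complete_edges n - F) ({0..<n} - {v})"
  unfolding outer_connected_dominating_def dom_iff[OF assms] by simp

lemma lower:
  assumes n: "n \<ge> 3" and F: "F \<subseteq> complete_edges n" "finite F"
    and c: "card F < (if n = 3 then 1 else (n+1) div 2)"
  shows "\<exists>v. outer_connected_dominating {0..<n} (complete_edges n - F) {v}"
proof -
  have c3: "card F + 3 \<le> n" and c2: "2 * card F < n" using c n by (auto split: if_splits)
  have fin: "\<forall>e\<in>F. finite e \<and> card e = 2" using F(1) unfolding complete_edges_def by (auto intro: finite_subset[OF _ finite_atLeastLessThan])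
  have "card (\<Union>F) \<le> sum card F" using fin by (metis card_Union_le_sum_card)
  also have "\<dots> = 2 * card F" using fin by simp
  finally have "card (\<Union>F) < card {0..<n}" using c2 by simp
  hence "\<not> {0..<n} \<subseteq> \<Union>F"
    using fin F(2) by (metis card_mono finite_Union not_le)
  then obtain v where v0: "v \<in> {0..<n}" "v \<notin> \<Union>F" by (metis subsetI)
  hence v: "v < n" "v \<notin> \<Union>F" by auto
  have "outer_connected_dominating {0..<n} (complete_edges n - F) {v}"
    unfolding ocd_single_iff[OF v(1)] using v connected_small[OF F c3 v(1)] by auto
  thus ?thesis by blast
qed

lemma no_single:
  assumes "\<forall>v<n. \<exists>u<n. u \<noteq> v \<and> {u,v} \<in> F"
  shows "\<not> (\<exists>v. outer_connected_dominating {0..<n} (complete_edges n - F) {v})"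
proof
  assume "\<exists>v. outer_connected_dominating {0..<n} (complete_edges n - F) {v}"
  then obtain v where o: "outer_connected_dominating {0..<n} (complete_edges n - F) {v}" by blast
  hence "v < n" by (simp add: outer_connected_dominating_def dominating_def)
  with o assms show False unfolding ocd_single_iff[OF \<open>v<n\<close>] by blast
qed

lemma upper:
  assumes n: "n \<ge> 3"
  shows "\<exists>F. F \<subseteq> complete_edges n \<and> finite F \<and> card F = (if n = 3 then 1 else (n+1) div 2)
          \<and> \<not> (\<exists>v. outer_connected_dominating {0..<n} (complete_edges n - F) {v})"
proof (cases "n = 3")
  case True
  let ?F = "{{0,1::nat}}"
  have "\<not> (\<exists>v. outer_connected_dominating {0..<n} (complete_edges n - ?F) {v})"
  proof
    assume "\<exists>v. outer_connected_dominating {0..<n} (complete_edges n - ?F) {v}"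
    then obtain v where o: "outer_connected_dominating {0..<n} (complete_edges n - ?F) {v}" by blast
    hence v: "v < n" by (simp add: outer_connected_dominating_def dominating_def)
    note oo = o[unfolded ocd_single_iff[OF v]]
    show False
    proof (cases "v = 2")
      case True
      have W: "{0..<n} - {v} = {0,1}" using \<open>n = 3\<close> True by auto
      have r: "(0::nat, 1::nat) \<in> {(u, w). u \<in> {0,1} \<and> w \<in> {0,1} \<and> adj (complete_edges n - ?F) u w}\<^sup>*"
        using oo unfolding W induced_connected_def by auto
      have na: "\<not> adj (complete_edges n - ?F) a b" if "a \<in> {0,1}" "b \<in> {0,1}" for a b :: nat
        using that by (auto simp: adj_def insert_commute)
      have R0: "{(u, w). u \<in> {0,1::nat} \<and> w \<in> {0,1} \<and> adj (complete_edges n - ?F) u w} = {}"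
        using na by blast
      from r[unfolded R0] show False by simp
    next
      case False
      hence v01: "v = 0 \<or> v = 1" using v \<open>n = 3\<close> by auto
      hence "1 - v < n" "1 - v \<noteq> v" using \<open>n = 3\<close> by auto
      hence "{1 - v, v} \<notin> ?F" using oo by blast
      moreover have "{1 - v, v} = {0, 1::nat}" using v01 by auto
      ultimately show False by simp
    qed
  qed
  moreover have "?F \<subseteq> complete_edges n" using True by (auto simp: complete_edges_def)
  ultimately show ?thesis using True by (intro exI[of _ ?F]) auto
next
  case False
  hence n4: "n \<ge> 4" using n by simp
  define m where "m = (n+1) div 2"
  define g where "g i = {2*i, if 2*i+1 < n then 2*i+1 else 0}" for i
  have lt: "2*i < n" if "i < m" for i using that n4 unfolding m_def by linarith
  have sub: "g i \<in> complete_edges n" if "i < m" for i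
    using lt[OF that] n4 unfolding g_def complete_edges_def by (auto simp: card_insert_if)
  have inj: "inj_on g {..<m}"
  proof (rule inj_onI)
    fix i j assume i: "i \<in> {..<m}" and j: "j \<in> {..<m}" and e: "g i = g j"
    have "2*i \<in> g i" unfolding g_def by simp
    hence "2*i \<in> g j" using e by simp
    hence h: "2*i = 2*j \<or> 2*i = (if 2*j+1 < n then 2*j+1 else 0)" unfolding g_def by simp
    show "i = j"
    proof (cases "2*i = 2*j")
      case True then show ?thesis by simp
    next
      case False
      hence "i = 0" using h by (auto split: if_split_asm; presburger)
      hence "g i = {0, 1}" using n4 unfolding g_def by simp
      moreover have "2*j \<in> g j" unfolding g_def by simp
      ultimately have "2*j \<in> {0,1::nat}" using e by simp
      hence "j = 0" by auto
      with \<open>i = 0\<close> show ?thesis by simp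
    qed
  qed
  let ?F = "g ` {..<m}"
  have cover: "\<forall>v<n. \<exists>u<n. u \<noteq> v \<and> {u,v} \<in> ?F"
  proof (intro allI impI)
    fix v assume v: "v < n"
    have dm: "v div 2 < m" using v unfolding m_def by linarith
    show "\<exists>u<n. u \<noteq> v \<and> {u,v} \<in> ?F"
    proof (cases "even v")
      case True
      hence "g (v div 2) = {v, if v+1 < n then v+1 else 0}" unfolding g_def by simp
      then have "{if v+1 < n then v+1 else 0, v} \<in> ?F" using dm
        by (metis imageI lessThan_iff insert_commute)
      then show ?thesis using v n4
        by (intro exI[of _ "if v+1 < n then v+1 else 0"]) auto
    next
      case False
      then obtain k where k: "v = 2*k+1" by (blast elim: oddE)
      hence "v div 2 = k" by simp
      hence "g (v div 2) = {v - 1, v}" unfolding g_def using v k by simp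
      then show ?thesis using dm v k
        by (intro exI[of _ "v - 1"]) (auto simp: insert_commute)
    qed
  qed
  have "card ?F = m" using inj by (simp add: card_image)
  moreover have mm: "(n+1) div 2 = m" by (simp add: m_def)
  moreover have "?F \<subseteq> complete_edges n" using sub by auto
  ultimately show ?thesis using False no_single[OF cover]
    by (intro exI[of _ ?F]) simp
qed


theorem mainTheorem8:
  fixes n :: nat
  assumes "n \<ge> 3"
  shows "ocd_bondage (complete_vertices n) (complete_edges n) =
           (if n = 3 then 1 else nat \<lceil>real n / 2\<rceil>)"
proof -
  define T where "T = (if n = 3 then 1 else (n+1) div 2)"
  have T: "(if n = 3 then 1 else nat \<lceil>real n / 2\<rceil>) = T" unfolding T_def ceil_half by simp
  have fin: "finite {0..<n}" and ne: "{0..<n} \<noteq> ({}::nat set)" using assms by auto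
  have T1: "T \<ge> 1" unfolding T_def using assms by auto
  have "\<exists>v. outer_connected_dominating {0..<n} (complete_edges n - {}) {v}"
    using lower[OF assms, of "{}"] T1 unfolding T_def by (auto simp: complete_edges_def)
  hence o1: "ocd_number {0..<n} (complete_edges n) = 1"
    using ocd_number_eq1(1)[OF fin ne] by simp
  have gt: "ocd_number {0..<n} (complete_edges n - F) > 1 \<longleftrightarrow>
      \<not> (\<exists>v. outer_connected_dominating {0..<n} (complete_edges n - F) {v})" for F
    using ocd_number_eq1[OF fin ne, of "complete_edges n - F"] by auto
  let ?P = "\<lambda>k. \<exists>F. F \<subseteq> complete_edges n \<and> finite F \<and> card F = k \<and>
      ocd_number {0..<n} (complete_edges n - F) > ocd_number {0..<n} (complete_edges n)"
  have "(LEAST k. ?P k) = T"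
  proof (rule Least_equality)
    show "?P T" using upper[OF assms] unfolding o1 gt T_def by blast
  next
    fix k assume "?P k"
    then obtain F where F: "F \<subseteq> complete_edges n" "finite F" "card F = k"
      "\<not> (\<exists>v. outer_connected_dominating {0..<n} (complete_edges n - F) {v})"
      unfolding o1 gt by blast
    show "T \<le> k"
    proof (rule ccontr)
      assume "\<not> T \<le> k"
      hence "card F < (if n = 3 then 1 else (n+1) div 2)" using F(3) unfolding T_def by simp
      from lower[OF assms F(1,2) this] F(4) show False by blast
    qed
  qed
  thus ?thesis unfolding T ocd_bondage_def complete_vertices_def .
qed

end
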